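(* Consider, for $\varepsilon>0$ and $|\sigma|\le\sigma_0\varepsilon$, the real analytic system $$\dot x=x(\sigma-az)+\tfrac{y}{\varepsilon}+\varepsilon\tilde f,\qquad \dot y=-\tfrac{x}{\varepsilon}+y(\sigma-az)+\varepsilon\tilde g,\qquad \dot z=-1+b(x^2+y^2)+z^2+\varepsilon\tilde h,$$ with the properties listed in the context. Take $\nu_1>0$ and the ellipsoid $S_{\nu_1}=\{z^2+\frac{b}{a+1}(x^2+y^2)=1-\nu_1\}$. Then there exists $\varepsilon_0>0$ such that for every $\varepsilon\in(0,\varepsilon_0)$ and $|\sigma|\le\sigma_0\varepsilon$, the surface $S_{\nu_1}\cap\{-1\le z\le-\varepsilon|\log\varepsilon|\}$ is contained in the region $D$ and the flow of the system points outwards on it.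
   Context: Here $a>0$, $b>0$, $\sigma_0>0$ constants; $\tilde f,\tilde g,\tilde h$ are real analytic functions of $(x,y,z,\varepsilon,\sigma)$ with $\tilde f,\tilde g=\mathcal{O}(\|(x,y)\|)$ and $\tilde h=(z+1)\tilde h_1+\tilde h_2$, $\tilde h_1$ bounded, $\tilde h_2=\mathcal{O}(\|(x,y,z+1)\|^2)$. $p_-=(0,0,-1)$ is a saddle-focus equilibrium whose two-dimensional unstable manifold satisfies $W^u(p_-)\cap\{z\le0\}=\{\frac{b}{a+1}(x^2+y^2)+z^2=1+\varepsilon(1-z^2)\psi(z,\theta)\}$ with $\psi$ analytic, $2\pi$-periodic in the polar angle $\theta$, and $|\psi|,|\partial_z\psi|\le M$, $|\partial_\theta\psi|\le\varepsilon M$ for $z\le0$. $D$ is the closed region contained in $\{z\le0\}$ with boundary $\{z=0\}\cup W^u(p_-)$. *)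

theory Defs
  imports "HOL-Analysis.Analysis"
begin

text \<open>Real analyticity of a real-valued function on a Euclidean space: locally the sum of an
  (unconditionally, i.e. absolutely) convergent multivariate power series, multi-indices being
  functions from the basis to nat.\<close>
definition real_analytic_on :: "'a::euclidean_space set \<Rightarrow> ('a \<Rightarrow> real) \<Rightarrow> bool" where
  "real_analytic_on S f \<longleftrightarrow>
     (\<forall>x0\<in>S. \<exists>r>0. \<exists>c :: ('a \<Rightarrow> nat) \<Rightarrow> real. \<forall>x\<in>ball x0 r.
        ((\<lambda>\<alpha>. c \<alpha> * (\<Prod>i\<in>Basis. ((x - x0) \<bullet> i) ^ \<alpha> i)) has_sum f x)
          {\<alpha>. \<forall>i. i \<notin> Basis \<longrightarrow> \<alpha> i = 0})"

definition fieldX :: "real \<Rightarrow> (real \<Rightarrow> real \<Rightarrow> real \<Rightarrow> real \<Rightarrow> real \<Rightarrow> real)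
    \<Rightarrow> real \<Rightarrow> real \<Rightarrow> real \<Rightarrow> real \<Rightarrow> real \<Rightarrow> real" where
  "fieldX a f eps sg x y z = x * (sg - a * z) + y / eps + eps * f x y z eps sg"

definition fieldY :: "real \<Rightarrow> (real \<Rightarrow> real \<Rightarrow> real \<Rightarrow> real \<Rightarrow> real \<Rightarrow> real)
    \<Rightarrow> real \<Rightarrow> real \<Rightarrow> real \<Rightarrow> real \<Rightarrow> real \<Rightarrow> real" where
  "fieldY a g eps sg x y z = - x / eps + y * (sg - a * z) + eps * g x y z eps sg"

definition fieldZ :: "real \<Rightarrow> (real \<Rightarrow> real \<Rightarrow> real \<Rightarrow> real \<Rightarrow> real \<Rightarrow> real)
    \<Rightarrow> real \<Rightarrow> real \<Rightarrow> real \<Rightarrow> real \<Rightarrow> real \<Rightarrow> real" where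
  "fieldZ b h eps sg x y z = -1 + b * (x^2 + y^2) + z^2 + eps * h x y z eps sg"

definition ellF :: "real \<Rightarrow> real \<Rightarrow> real \<Rightarrow> real \<Rightarrow> real \<Rightarrow> real" where
  "ellF a b x y z = z^2 + b / (a + 1) * (x^2 + y^2)"

definition surf_piece :: "real \<Rightarrow> real \<Rightarrow> real \<Rightarrow> real \<Rightarrow> (real \<times> real \<times> real) set" where
  "surf_piece a b nu1 eps =
     {(x, y, z). ellF a b x y z = 1 - nu1 \<and> -1 \<le> z \<and> z \<le> - eps * \<bar>ln eps\<bar>}"

text \<open>The region D: the closed region in z <= 0 bounded by z = 0 and the unstable manifold
  {b/(a+1)(x^2+y^2) + z^2 = 1 + eps (1 - z^2) psi(z, theta)}, theta the polar angle of (x,y).\<close>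
definition regionD :: "real \<Rightarrow> real \<Rightarrow> (real \<Rightarrow> real \<Rightarrow> real) \<Rightarrow> real
    \<Rightarrow> (real \<times> real \<times> real) set" where
  "regionD a b psi eps =
     {(x, y, z). z \<le> 0 \<and>
        ellF a b x y z \<le> 1 + eps * (1 - z^2) * psi z (Arg (Complex x y))}"

definition points_outward :: "real \<Rightarrow> real \<Rightarrow> (real \<Rightarrow> real \<Rightarrow> real \<Rightarrow> real \<Rightarrow> real \<Rightarrow> real)
    \<Rightarrow> (real \<Rightarrow> real \<Rightarrow> real \<Rightarrow> real \<Rightarrow> real \<Rightarrow> real) \<Rightarrow> (real \<Rightarrow> real \<Rightarrow> real \<Rightarrow> real \<Rightarrow> real \<Rightarrow> real)
    \<Rightarrow> real \<Rightarrow> real \<Rightarrow> real \<Rightarrow> real \<Rightarrow> real \<Rightarrow> bool" where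
  "points_outward a b f g h eps sg x y z \<longleftrightarrow>
     2 * (b / (a + 1)) * x * fieldX a f eps sg x y z
   + 2 * (b / (a + 1)) * y * fieldY a g eps sg x y z
   + 2 * z * fieldZ b h eps sg x y z > 0"

end

theory Submission
  imports Defs
begin


lemma abs_le_1_sq: "\<bar>x::real\<bar> \<le> 1 + x^2"
proof (cases "\<bar>x\<bar> \<le> 1")
  case True then show ?thesis using zero_le_power2[of x] by linarith
next
  case False
  then have "\<bar>x\<bar> * 1 \<le> \<bar>x\<bar> * \<bar>x\<bar>" by (intro mult_left_mono) auto
  then show ?thesis by (simp add: power2_eq_square abs_mult_self_eq)
qed

lemma ident0:
  fixes c eps sg x y z F G :: real
  assumes "eps \<noteq> 0"
  shows "2 * c * x * (x * (sg - a * z) + y / eps + eps * F)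
   + 2 * c * y * (- x / eps + y * (sg - a * z) + eps * G)
   = 2*(c*(x^2+y^2)) * (sg-a*z) + 2*eps*(c*(x*F+y*G))"
  using assms by (simp add: algebra_simps power2_eq_square)

lemma ident:
  fixes a b eps sg x y z F G H nu1 :: real
  assumes "a > 0" "eps \<noteq> 0" "z^2 + b/(a+1)*(x^2+y^2) = 1 - nu1"
  shows "2 * (b / (a + 1)) * x * (x * (sg - a * z) + y / eps + eps * F)
   + 2 * (b / (a + 1)) * y * (- x / eps + y * (sg - a * z) + eps * G)
   + 2 * z * (-1 + b * (x^2 + y^2) + z^2 + eps * H)
   = 2*((1-nu1-z^2)* sg - nu1*z + eps*(b/(a+1)*(x*F+y*G) + z*H))"
proof -
  have r0: "b/(a+1)*(x^2+y^2) = 1-nu1-z^2" using assms(3) by linarith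
  have r: "b*(x^2+y^2) = (a+1)*(1-nu1-z^2)" unfolding r0[symmetric] using assms(1) by simp
  have "2 * (b / (a + 1)) * x * (x * (sg - a * z) + y / eps + eps * F)
   + 2 * (b / (a + 1)) * y * (- x / eps + y * (sg - a * z) + eps * G)
   = 2*(b/(a+1)*(x^2+y^2)) * (sg-a*z) + 2*eps*(b/(a+1)*(x*F+y*G))"
    by (rule ident0[OF assms(2)])
  also have "b/(a+1)*(x^2+y^2) = 1-nu1-z^2" using assms(3) by linarith
  finally have e1: "2 * (b / (a + 1)) * x * (x * (sg - a * z) + y / eps + eps * F)
   + 2 * (b / (a + 1)) * y * (- x / eps + y * (sg - a * z) + eps * G)
   = 2*(1-nu1-z^2)*(sg-a*z) + 2*eps*(b/(a+1)*(x*F+y*G))" by simp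
  have e2: "2 * z * (-1 + b * (x^2 + y^2) + z^2 + eps * H) = 2 * z * (-1 + (a+1)*(1-nu1-z^2) + z^2 + eps * H)"
    using r by simp
  show ?thesis unfolding e2 using e1 by (simp add: algebra_simps)
qed

lemma xF_bound:
  fixes x r F K :: real
  assumes "x^2 \<le> r" "\<bar>F\<bar> \<le> K * sqrt r"
  shows "\<bar>x * F\<bar> \<le> \<bar>K\<bar> * r"
proof -
  have r0: "0 \<le> r" using assms(1) zero_le_power2[of x] by linarith
  have "\<bar>x\<bar> \<le> sqrt r" using assms(1) real_sqrt_le_mono[OF assms(1)] by simp
  then have "\<bar>x\<bar> * \<bar>F\<bar> \<le> sqrt r * (K * sqrt r)"
    using assms(2) r0 by (intro mult_mono) auto
  also have "\<dots> = K * r" using r0 by (simp add: algebra_simps)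
  also have "\<dots> \<le> \<bar>K\<bar> * r" using r0 by (intro mult_right_mono) auto
  finally show ?thesis by (simp add: abs_mult)
qed

theorem lemma3p5:
  fixes a b sigma0 eps1 nu1 M :: real
    and f g h :: "real \<Rightarrow> real \<Rightarrow> real \<Rightarrow> real \<Rightarrow> real \<Rightarrow> real"
    and psi :: "real \<Rightarrow> real \<Rightarrow> real \<Rightarrow> real \<Rightarrow> real"
  assumes a_pos: "a > 0" and b_pos: "b > 0" and sigma0_pos: "sigma0 > 0"
    and eps1_pos: "eps1 > 0" and nu1_pos: "nu1 > 0"
    and f_an: "real_analytic_on UNIV (\<lambda>(x, y, z, e, s). f x y z e s)"
    and g_an: "real_analytic_on UNIV (\<lambda>(x, y, z, e, s). g x y z e s)"
    and h_an: "real_analytic_on UNIV (\<lambda>(x, y, z, e, s). h x y z e s)"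
    and f_O: "\<And>B. compact B \<Longrightarrow> \<exists>K. \<forall>x y z e s. (x, y, z, e, s) \<in> B \<longrightarrow>
                 \<bar>f x y z e s\<bar> \<le> K * sqrt (x^2 + y^2)"
    and g_O: "\<And>B. compact B \<Longrightarrow> \<exists>K. \<forall>x y z e s. (x, y, z, e, s) \<in> B \<longrightarrow>
                 \<bar>g x y z e s\<bar> \<le> K * sqrt (x^2 + y^2)"
    and h_split: "\<exists>h1 h2 C.
        (\<forall>x y z e s. h x y z e s = (z + 1) * h1 x y z e s + h2 x y z e s) \<and>
        (\<forall>x y z e s. \<bar>h1 x y z e s\<bar> \<le> C) \<and>
        (\<forall>B. compact B \<longrightarrow> (\<exists>K. \<forall>x y z e s. (x, y, z, e, s) \<in> B \<longrightarrow>
                 \<bar>h2 x y z e s\<bar> \<le> K * (x^2 + y^2 + (z + 1)^2)))"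
    and psi_props: "\<And>e s. 0 < e \<Longrightarrow> e < eps1 \<Longrightarrow> \<bar>s\<bar> \<le> sigma0 * e \<Longrightarrow>
        (\<exists>U. open U \<and> {p. fst p \<le> 0} \<subseteq> U \<and>
             real_analytic_on U (\<lambda>(z, \<theta>). psi e s z \<theta>)) \<and>
        (\<forall>z \<theta>. psi e s z (\<theta> + 2 * pi) = psi e s z \<theta>) \<and>
        (\<forall>z \<theta>. z \<le> 0 \<longrightarrow>
            \<bar>psi e s z \<theta>\<bar> \<le> M \<and>
            \<bar>deriv (\<lambda>z'. psi e s z' \<theta>) z\<bar> \<le> M \<and>
            \<bar>deriv (\<lambda>t. psi e s z t) \<theta>\<bar> \<le> e * M)"
  shows "\<exists>eps0>0. \<forall>eps sg. 0 < eps \<and> eps < eps0 \<and> \<bar>sg\<bar> \<le> sigma0 * eps \<longrightarrow>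
           surf_piece a b nu1 eps \<subseteq> regionD a b (psi eps sg) eps \<and>
           (\<forall>(x, y, z) \<in> surf_piece a b nu1 eps. points_outward a b f g h eps sg x y z)"
  proof -
  obtain h1 h2 C where hdef: "\<forall>x y z e s. h x y z e s = (z + 1) * h1 x y z e s + h2 x y z e s"
    and h1b: "\<forall>x y z e s. \<bar>h1 x y z e s\<bar> \<le> C"
    and h2O: "\<forall>B. compact B \<longrightarrow> (\<exists>K. \<forall>x y z e s. (x, y, z, e, s) \<in> B \<longrightarrow>
                 \<bar>h2 x y z e s\<bar> \<le> K * (x^2 + y^2 + (z + 1)^2))"
    using h_split by (elim exE conjE) (rule that)
  define c where "c = b / (a + 1)"
  have c0: "c > 0" using a_pos b_pos by (simp add: c_def)
  define R2 where "R2 = 1 / c"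
  have R20: "R2 > 0" using c0 by (simp add: R2_def)
  define R where "R = R2 + 1"
  define B :: "(real \<times> real \<times> real \<times> real \<times> real) set" where
    "B = {-R..R} \<times> {-R..R} \<times> {-1..0} \<times> {0..1} \<times> {-sigma0..sigma0}"
  have cB: "compact B" unfolding B_def by (intro compact_Times compact_Icc)
  obtain Kf where Kf: "\<forall>x y z e s. (x, y, z, e, s) \<in> B \<longrightarrow> \<bar>f x y z e s\<bar> \<le> Kf * sqrt (x^2 + y^2)"
    using f_O[OF cB] by blast
  obtain Kg where Kg: "\<forall>x y z e s. (x, y, z, e, s) \<in> B \<longrightarrow> \<bar>g x y z e s\<bar> \<le> Kg * sqrt (x^2 + y^2)"
    using g_O[OF cB] by blast
  obtain K2 where K2: "\<forall>x y z e s. (x, y, z, e, s) \<in> B \<longrightarrow>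
                 \<bar>h2 x y z e s\<bar> \<le> K2 * (x^2 + y^2 + (z + 1)^2)"
    using h2O cB by blast
  define P where "P = c * \<bar>Kf\<bar> * R2 + c * \<bar>Kg\<bar> * R2 + \<bar>C\<bar> + \<bar>K2\<bar> * (R2 + 1)"
  define L where "L = (sigma0 + P) / nu1"
  define eps0 where "eps0 = min eps1 (min 1 (min (exp (-(L+1))) (nu1 / (\<bar>M\<bar> + 1))))"
  have eps0_pos: "eps0 > 0" using eps1_pos nu1_pos by (simp add: eps0_def)
  show ?thesis
  proof (intro exI[of _ eps0] conjI allI impI eps0_pos)
    fix eps sg assume H: "0 < eps \<and> eps < eps0 \<and> \<bar>sg\<bar> \<le> sigma0 * eps"
    have e0: "0 < eps" and e1: "eps < eps1" and sgb: "\<bar>sg\<bar> \<le> sigma0 * eps"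
      and elt1: "eps < 1" and eexp: "eps < exp (-(L+1))" and eM: "eps < nu1 / (\<bar>M\<bar> + 1)"
      using H unfolding eps0_def by linarith+
    have "ln eps < ln (exp (-(L+1)))" using eexp e0 by (subst ln_less_cancel_iff) auto
    then have lnb: "- ln eps > L + 1" by simp
    have lnneg: "ln eps < 0" using e0 elt1 by simp
    have absln: "\<bar>ln eps\<bar> = - ln eps" using lnneg by simp
    note psi = psi_props[OF e0 e1 sgb]
    have epsM: "eps * \<bar>M\<bar> < nu1"
    proof -
      have "eps * (\<bar>M\<bar> + 1) < nu1" using eM by (simp add: field_simps)
      then show ?thesis using e0 by (simp add: algebra_simps)
    qed
    have zle: "z \<le> 0" if "z \<le> - eps * \<bar>ln eps\<bar>" for z
    proof -
      have "0 \<le> eps * \<bar>ln eps\<bar>" using e0 by simp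
      then show ?thesis using that by linarith
    qed
    show "surf_piece a b nu1 eps \<subseteq> regionD a b (psi eps sg) eps"
    proof
      fix p assume pS: "p \<in> surf_piece a b nu1 eps"
      obtain x y z where p: "p = (x, y, z)" by (cases p)
      have ell: "ellF a b x y z = 1 - nu1" and zl: "-1 \<le> z" and zu: "z \<le> - eps * \<bar>ln eps\<bar>"
        using pS unfolding surf_piece_def p by simp_all
      have z0: "z \<le> 0" using zle[OF zu] .
      have z2: "z^2 \<le> 1" using abs_le_square_iff[of z 1] zl z0 by simp
      have z2': "0 \<le> 1 - z^2" "1 - z^2 \<le> 1" using z2 by (simp_all add: zero_le_power2)
      note pall = conjunct2[OF conjunct2[OF psi]]
      have pb: "\<bar>psi eps sg z (Arg (Complex x y))\<bar> \<le> M"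
        using pall[rule_format, OF z0] by (rule conjunct1)
      have m1: "\<bar>eps * (1 - z^2)\<bar> \<le> eps"
        using e0 z2' by (simp add: abs_mult mult_left_le)
      have "\<bar>eps * (1 - z^2) * psi eps sg z (Arg (Complex x y))\<bar> \<le> eps * \<bar>M\<bar>"
        unfolding abs_mult[of "eps * (1 - z^2)"]
        using m1 pb e0 by (intro mult_mono) auto
      then have ge: "eps * (1 - z^2) * psi eps sg z (Arg (Complex x y)) \<ge> - nu1"
        using epsM by linarith
      have "ellF a b x y z \<le> 1 + eps * (1 - z^2) * psi eps sg z (Arg (Complex x y))"
        using ell ge by linarith
      then show "p \<in> regionD a b (psi eps sg) eps"
        unfolding regionD_def p using z0 by simp
    qed
    have pt: "points_outward a b f g h eps sg x y z"
      if "(x, y, z) \<in> surf_piece a b nu1 eps" for x y z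
    proof -
      have ell: "z^2 + c * (x^2 + y^2) = 1 - nu1" and zl: "-1 \<le> z" and zu: "z \<le> - eps * \<bar>ln eps\<bar>"
        using that unfolding surf_piece_def ellF_def c_def by simp_all
      have z0: "z \<le> 0" using zle[OF zu] .
      define r where "r = x^2 + y^2"
      have r0: "r \<ge> 0" by (simp add: r_def)
      have cr: "c * r = 1 - nu1 - z^2" using ell by (simp add: r_def)
      have cr0: "0 \<le> 1 - nu1 - z^2" using cr c0 r0 by (metis mult_nonneg_nonneg less_imp_le)
      have cr1: "1 - nu1 - z^2 \<le> 1" using nu1_pos zero_le_power2[of z] by linarith
      have rR2: "r \<le> R2"
      proof -
        have "c * r \<le> 1" using cr cr1 by simp
        then show ?thesis using c0 by (simp add: R2_def field_simps)
      qed
      have xr: "x^2 \<le> r" and yr: "y^2 \<le> r" unfolding r_def by simp_all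
      have xR: "\<bar>x\<bar> \<le> R" using abs_le_1_sq[of x] rR2 xr unfolding R_def by linarith
      have yR: "\<bar>y\<bar> \<le> R" using abs_le_1_sq[of y] rR2 yr unfolding R_def by linarith
      have inB: "(x, y, z, eps, sg) \<in> B"
      proof -
        have "sigma0 * eps \<le> sigma0" using sigma0_pos elt1 by simp
        then have "-sigma0 \<le> sg" "sg \<le> sigma0" using sgb by linarith+
        moreover have "-R \<le> x" "x \<le> R" "-R \<le> y" "y \<le> R" using xR yR by linarith+
        ultimately show ?thesis unfolding B_def using zl z0 e0 elt1 by simp
      qed
      define F where "F = f x y z eps sg"
      define G where "G = g x y z eps sg"
      define HH where "HH = h x y z eps sg"
      have Fb: "\<bar>F\<bar> \<le> Kf * sqrt r" using Kf inB by (simp add: F_def r_def)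
      have Gb: "\<bar>G\<bar> \<le> Kg * sqrt r" using Kg inB by (simp add: G_def r_def)
      have xF: "\<bar>x * F\<bar> \<le> \<bar>Kf\<bar> * R2"
      proof -
        have "\<bar>Kf\<bar> * r \<le> \<bar>Kf\<bar> * R2" using rR2 by (intro mult_left_mono) auto
        then show ?thesis using xF_bound[OF xr Fb] by linarith
      qed
      have yG: "\<bar>y * G\<bar> \<le> \<bar>Kg\<bar> * R2"
      proof -
        have "\<bar>Kg\<bar> * r \<le> \<bar>Kg\<bar> * R2" using rR2 by (intro mult_left_mono) auto
        then show ?thesis using xF_bound[OF yr Gb] by linarith
      qed
      have zp1: "\<bar>z + 1\<bar> \<le> 1" using zl z0 by simp
      have h1t: "\<bar>(z + 1) * h1 x y z eps sg\<bar> \<le> \<bar>C\<bar>"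
      proof -
        have "\<bar>(z + 1) * h1 x y z eps sg\<bar> \<le> 1 * \<bar>C\<bar>" unfolding abs_mult
          using zp1 h1b by (intro mult_mono) (auto intro: order_trans[OF _ abs_ge_self])
        then show ?thesis by simp
      qed
      have h2t: "\<bar>h2 x y z eps sg\<bar> \<le> \<bar>K2\<bar> * (R2 + 1)"
      proof -
        have a1: "\<bar>h2 x y z eps sg\<bar> \<le> K2 * (r + (z + 1)^2)" using K2 inB by (simp add: r_def)
        have "(z+1)^2 \<le> 1" using zp1 abs_le_square_iff[of "z+1" 1] by simp
        then have a2: "0 \<le> r + (z+1)^2" "r + (z+1)^2 \<le> R2 + 1" using r0 rR2 by auto
        have "K2 * (r + (z + 1)^2) \<le> \<bar>K2\<bar> * (r + (z + 1)^2)" using a2 by (intro mult_right_mono) auto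
        also have "\<dots> \<le> \<bar>K2\<bar> * (R2 + 1)" using a2 by (intro mult_left_mono) auto
        finally show ?thesis using a1 by simp
      qed
      have Hb: "\<bar>z * HH\<bar> \<le> \<bar>C\<bar> + \<bar>K2\<bar> * (R2 + 1)"
      proof -
        have "HH = (z + 1) * h1 x y z eps sg + h2 x y z eps sg" using hdef by (simp add: HH_def)
        then have "\<bar>HH\<bar> \<le> \<bar>(z + 1) * h1 x y z eps sg\<bar> + \<bar>h2 x y z eps sg\<bar>"
          by (simp add: abs_triangle_ineq)
        then have "\<bar>HH\<bar> \<le> \<bar>C\<bar> + \<bar>K2\<bar> * (R2 + 1)" using h1t h2t by linarith
        moreover have "\<bar>z\<bar> \<le> 1" using zl z0 by simp
        ultimately have "\<bar>z\<bar> * \<bar>HH\<bar> \<le> 1 * (\<bar>C\<bar> + \<bar>K2\<bar> * (R2 + 1))"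
          by (intro mult_mono) auto
        then show ?thesis by (simp add: abs_mult)
      qed
      define E where "E = c * (x * F + y * G) + z * HH"
      have Eb: "\<bar>E\<bar> \<le> P"
      proof -
        have "\<bar>c * (x * F + y * G)\<bar> \<le> c * (\<bar>Kf\<bar> * R2 + \<bar>Kg\<bar> * R2)"
        proof -
          have "\<bar>x * F + y * G\<bar> \<le> \<bar>Kf\<bar> * R2 + \<bar>Kg\<bar> * R2"
            using xF yG abs_triangle_ineq[of "x * F" "y * G"] by linarith
          then have "c * \<bar>x * F + y * G\<bar> \<le> c * (\<bar>Kf\<bar> * R2 + \<bar>Kg\<bar> * R2)"
            using c0 by (intro mult_left_mono) auto
          then show ?thesis using c0 by (simp add: abs_mult)
        qed
        then show ?thesis using Hb unfolding E_def P_def by (simp add: algebra_simps) linarith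
      qed
      have id: "2 * (b / (a + 1)) * x * fieldX a f eps sg x y z
   + 2 * (b / (a + 1)) * y * fieldY a g eps sg x y z
   + 2 * z * fieldZ b h eps sg x y z = 2 * ((1 - nu1 - z^2) * sg - nu1 * z + eps * E)"
        unfolding fieldX_def fieldY_def fieldZ_def E_def c_def F_def G_def HH_def
        by (rule ident) (use a_pos e0 ell in \<open>auto simp: c_def\<close>)
      have t1: "\<bar>(1 - nu1 - z^2) * sg\<bar> \<le> sigma0 * eps"
      proof -
        have "\<bar>(1 - nu1 - z^2) * sg\<bar> \<le> 1 * \<bar>sg\<bar>" unfolding abs_mult
          using cr0 cr1 by (intro mult_right_mono) auto
        then show ?thesis using sgb by simp
      qed
      have t2: "\<bar>eps * E\<bar> \<le> eps * P" using Eb e0 by (simp add: abs_mult)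
      have t3: "- nu1 * z \<ge> nu1 * (eps * (- ln eps))"
        using zu absln nu1_pos by (simp add: mult_left_mono)
      have "nu1 * (eps * (- ln eps)) > nu1 * (eps * (L + 1))"
        using lnb nu1_pos e0 by (intro mult_strict_left_mono) auto
      moreover have "nu1 * (eps * (L + 1)) = eps * (sigma0 + P) + nu1 * eps"
        using nu1_pos by (simp add: L_def field_simps)
      moreover have "nu1 * eps > 0" using nu1_pos e0 by simp
      ultimately have "(1 - nu1 - z^2) * sg - nu1 * z + eps * E > 0"
        using t1 t2 t3 by (simp add: algebra_simps)
      then show ?thesis unfolding points_outward_def id by simp
    qed
    show "\<forall>(x, y, z) \<in> surf_piece a b nu1 eps. points_outward a b f g h eps sg x y z"
    proof (intro ballI)
      fix p assume pS: "p \<in> surf_piece a b nu1 eps"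
      obtain x y z where p: "p = (x, y, z)" by (cases p) auto
      show "case p of (x, y, z) \<Rightarrow> points_outward a b f g h eps sg x y z"
        using pt pS unfolding p by simp
    qed
  qed
qed

end
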